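(* Let $m\ge2$ and consider a preferential (dynamic) attachment circuit of index $m$. Let $Y_n^{(0)}$ and $Y_n^{(1)}$ be the numbers of nodes of outdegree $0$ and $1$ after $n$ insertions. Then, as $n\to\infty$, $\frac1n$ times the covariance matrix of the random vector $(Y_n^{(0)},Y_n^{(1)})^\top$ converges to $$\begin{pmatrix}\frac{2m^2(m+1)}{(3m+1)(2m+1)^2} & -\frac{4(m+1)^2m^2}{(4m+1)(3m+1)(2m+1)^2}\\[2pt] -\frac{4(m+1)^2m^2}{(4m+1)(3m+1)(2m+1)^2} & \frac{2m^2(m+1)(48m^3+59m^2+27m+4)}{(5m+1)(4m+1)(3m+1)^2(2m+1)^2}\end{pmatrix}.$$
   Context: Preferential (dynamic) attachment circuit of index $m\ge1$: at time $0$ there is a single node labeled $0$. At each time $n\ge1$ a new node labeled $n$ is added and $m$ parents are chosen for it one at a time, with replacement, among nodes $0,\dots,n-1$. Before the $(i+1)$-th choice ($i=0,\dots,m-1$), each existing node $v$ is chosen with probability $\frac{d_i(v)+1}{\sum_{x}(d_i(x)+1)}$, where $d_i(x)$ is the outdegree of $x$ in the current multigraph including the edges created by the first $i$ choices for node $n$; after each choice an edge from the chosen parent to node $n$ is immediately added (multi-edges allowed, counted with multiplicity). *)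

theory Defs
  imports "HOL-Probability.Probability"
begin

text \<open>States: the list of outdegrees of nodes 0..n (index = node label).\<close>

text \<open>One parent choice: node i chosen with probability (d(i)+1) / sum (d(x)+1);
  its outdegree is then incremented (edge added immediately).\<close>
definition pa_choose :: "nat list \<Rightarrow> nat list pmf" where
  "pa_choose ds =
     map_pmf (\<lambda>i. ds[i := ds ! i + 1])
       (pmf_of_multiset (\<Sum>i<length ds. replicate_mset (ds ! i + 1) i))"

fun pa_choose_iter :: "nat \<Rightarrow> nat list \<Rightarrow> nat list pmf" where
  "pa_choose_iter 0 ds = return_pmf ds"
| "pa_choose_iter (Suc k) ds = bind_pmf (pa_choose ds) (pa_choose_iter k)"

definition pa_step :: "nat \<Rightarrow> nat list \<Rightarrow> nat list pmf" where
  "pa_step m ds = map_pmf (\<lambda>ds'. ds' @ [0]) (pa_choose_iter m ds)"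

fun pa_circuit :: "nat \<Rightarrow> nat \<Rightarrow> nat list pmf" where
  "pa_circuit m 0 = return_pmf [0]"
| "pa_circuit m (Suc n) = bind_pmf (pa_circuit m n) (pa_step m)"

definition outdeg_count :: "nat \<Rightarrow> nat list \<Rightarrow> nat" where
  "outdeg_count k ds = length (filter (\<lambda>d. d = k) ds)"

definition pmf_cov :: "'a pmf \<Rightarrow> ('a \<Rightarrow> real) \<Rightarrow> ('a \<Rightarrow> real) \<Rightarrow> real" where
  "pmf_cov p X Y = measure_pmf.expectation p (\<lambda>x. (X x - measure_pmf.expectation p X) *
                                                  (Y x - measure_pmf.expectation p Y))"

definition Y_cov :: "nat \<Rightarrow> nat \<Rightarrow> nat \<Rightarrow> nat \<Rightarrow> real" where
  "Y_cov m n i j = pmf_cov (pa_circuit m n) (\<lambda>ds. real (outdeg_count i ds)) (\<lambda>ds. real (outdeg_count j ds))"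

end

theory Submission
  imports Defs
begin


abbreviation cR :: "nat \<Rightarrow> nat list \<Rightarrow> real" where "cR k ds \<equiv> real (outdeg_count k ds)"
abbreviation WR :: "nat list \<Rightarrow> real" where "WR ds \<equiv> real (sum_list ds + length ds)"

lemma sum_nth_list: "(\<Sum>i<length xs. f (xs!i)) = sum_list (map f xs)"
  by (induction xs) (simp_all add: sum.lessThan_Suc_shift del: sum.lessThan_Suc)

lemma cR_list: "cR k ds = sum_list (map (\<lambda>d. if d = k then 1 else 0::real) ds)"
  unfolding outdeg_count_def by (induction ds) auto

lemma sum_list_upd_real: "i < length xs \<Longrightarrow> sum_list ((xs::real list)[i := x]) = sum_list xs + x - xs ! i"
  by (induction xs arbitrary: i) (auto split: nat.split)

lemma cR_upd: "i < length ds \<Longrightarrow>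
   cR k (ds[i := v]) = cR k ds - (if ds!i = k then 1 else 0) + (if v = k then 1 else 0)"
  unfolding cR_list map_update by (simp add: sum_list_upd_real)

lemma size_sum_mset: "size (sum (f :: 'b \<Rightarrow> 'a multiset) A) = (\<Sum>a\<in>A. size (f a))"
  by (induct A rule: infinite_finite_induct) simp_all

lemma E_choose_raw:
  assumes ne: "ds \<noteq> []"
  shows "measure_pmf.expectation (pa_choose ds) h =
     (\<Sum>i<length ds. (real (ds!i) + 1) * h (ds[i := ds!i + 1])) / WR ds"
proof -
  define M where "M = (\<Sum>i<length ds. replicate_mset (ds ! i + 1) i)"
  have cnt: "count M i = (if i < length ds then ds!i + 1 else 0)" for i
    unfolding M_def count_sum count_replicate_mset by (auto simp: sum.delta)
  have sz: "size M = sum_list ds + length ds"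
  proof -
    have "sum_list (map Suc xs) = sum_list xs + length xs" for xs by (induction xs) auto
    then show ?thesis unfolding M_def size_sum_mset using sum_nth_list[of Suc ds] by simp
  qed
  have inM: "i \<in># M \<Longrightarrow> i < length ds" for i
    using cnt[of i] by (metis count_eq_zero_iff)
  have Mne: "M \<noteq> {#}" using ne sz by auto
  have "measure_pmf.expectation (pa_choose ds) h =
      measure_pmf.expectation (pmf_of_multiset M) (\<lambda>i. h (ds[i := ds!i + 1]))"
    unfolding pa_choose_def M_def by simp
  also have "\<dots> = (\<Sum>i<length ds. pmf (pmf_of_multiset M) i *\<^sub>R h (ds[i := ds!i + 1]))"
    by (rule integral_measure_pmf) (use Mne inM in auto)
  also have "\<dots> = (\<Sum>i<length ds. (real (ds!i) + 1) * h (ds[i := ds!i + 1]) / WR ds)"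
    using Mne by (intro sum.cong) (auto simp: cnt sz)
  finally show ?thesis by (simp add: sum_divide_distrib)
qed

lemma cR_sum: "(\<Sum>i<length ds. if ds!i = k then 1 else 0) = cR k ds"
  unfolding cR_list by (rule sum_nth_list)

lemma WR_sum: "(\<Sum>i<length ds. real (ds!i) + 1) = WR ds"
proof -
  have "sum_list (map (\<lambda>d. real d + 1) xs) = WR xs" for xs by (induction xs) auto
  then show ?thesis using sum_nth_list[of "\<lambda>d. real d + 1" ds] by simp
qed

lemma E_choose:
  assumes ne: "ds \<noteq> []"
  shows "measure_pmf.expectation (pa_choose ds) (\<lambda>x. F (cR 0 x) (cR 1 x)) =
    (cR 0 ds * F (cR 0 ds - 1) (cR 1 ds + 1) + 2 * cR 1 ds * F (cR 0 ds) (cR 1 ds - 1)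
     + (WR ds - cR 0 ds - 2 * cR 1 ds) * F (cR 0 ds) (cR 1 ds)) / WR ds"
proof -
  define A where "A = F (cR 0 ds - 1) (cR 1 ds + 1)"
  define B where "B = F (cR 0 ds) (cR 1 ds - 1)"
  define C where "C = F (cR 0 ds) (cR 1 ds)"
  have pt: "(real (ds!i) + 1) * F (cR 0 (ds[i := ds!i + 1])) (cR 1 (ds[i := ds!i + 1])) =
     (if ds!i = 0 then 1 else 0) * A + (if ds!i = 1 then 2 else 0) * B
     + ((real (ds!i) + 1) - (if ds!i = 0 then 1 else 0) - (if ds!i = 1 then 2 else 0)) * C"
    if "i < length ds" for i
    using that by (cases "ds!i = 0"; cases "ds!i = 1") (auto simp: cR_upd A_def B_def C_def)
  have "(\<Sum>i<length ds. (real (ds!i) + 1) * F (cR 0 (ds[i := ds!i + 1])) (cR 1 (ds[i := ds!i + 1])))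
     = (\<Sum>i<length ds. (if ds!i = 0 then 1 else 0) * A + (if ds!i = 1 then 2 else 0) * B
     + ((real (ds!i) + 1) - (if ds!i = 0 then 1 else 0) - (if ds!i = 1 then 2 else 0)) * C)"
    by (rule sum.cong[OF refl], rule pt) simp
  also have "\<dots> = cR 0 ds * A + 2 * cR 1 ds * B + (WR ds - cR 0 ds - 2 * cR 1 ds) * C"
  proof -
    have e2: "(\<Sum>i<length ds. (if ds!i = 1 then 2 else 0::real)) = 2 * cR 1 ds"
    proof -
      have "(\<Sum>i<length ds. (if ds!i = 1 then 2 else 0::real)) = (\<Sum>i<length ds. 2 * (if ds!i = 1 then 1 else 0::real))"
        by (rule sum.cong) auto
      then show ?thesis using cR_sum[of ds 1] by (simp add: sum_distrib_left[symmetric])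
    qed
    have gen: "(\<Sum>i\<in>I. a i * A + b i * B + (w i - a i - b i) * C) =
        (\<Sum>i\<in>I. a i) * A + (\<Sum>i\<in>I. b i) * B + ((\<Sum>i\<in>I. w i) - (\<Sum>i\<in>I. a i) - (\<Sum>i\<in>I. b i)) * C"
      for I :: "nat set" and a b w :: "nat \<Rightarrow> real"
      by (simp add: sum.distrib sum_subtractf sum_distrib_right sum_distrib_left algebra_simps)
    show ?thesis
      by (subst gen) (simp only: cR_sum WR_sum e2)
  qed
  finally show ?thesis unfolding E_choose_raw[OF ne] A_def B_def C_def by simp
qed




lemma lin_rec_limit:
  fixes x f b :: "nat \<Rightarrow> real"
  assumes rec: "\<And>n. x (Suc n) = f n * x n + b n"
    and fb: "eventually (\<lambda>n. \<bar>f n\<bar> \<le> 1) sequentially"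
    and fa: "(\<lambda>n. real n * (1 - f n)) \<longlonglongrightarrow> a"
    and bl: "b \<longlonglongrightarrow> \<beta>"
    and a: "1 + a \<noteq> 0"
  shows "(\<lambda>n. x n / real n) \<longlonglongrightarrow> \<beta> / (1 + a)"
proof -
  define c where "c = \<beta> / (1 + a)"
  define y where "y n = x n - c * real n" for n
  define e where "e n = b n - c - c * (real n * (1 - f n))" for n
  have yrec: "y (Suc n) = f n * y n + e n" for n
    unfolding y_def e_def rec by (simp add: algebra_simps)
  have "e \<longlonglongrightarrow> \<beta> - c - c * a"
    unfolding e_def by (intro tendsto_intros bl fa)
  moreover have "\<beta> - c - c * a = 0" using a unfolding c_def by (simp add: field_simps)
  ultimately have e0: "e \<longlonglongrightarrow> 0" by simp
  have y0: "(\<lambda>n. y n / real n) \<longlonglongrightarrow> 0"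
  proof (rule LIMSEQ_I)
    fix r :: real assume r: "0 < r"
    have "eventually (\<lambda>n. \<bar>e n\<bar> < r/2) sequentially"
      using e0 r by (auto simp: tendsto_iff dist_real_def dest!: spec[of _ "r/2"])
    then have "eventually (\<lambda>n. \<bar>f n\<bar> \<le> 1 \<and> \<bar>e n\<bar> < r/2) sequentially"
      using fb by eventually_elim auto
    then obtain N where N: "\<And>n. n \<ge> N \<Longrightarrow> \<bar>f n\<bar> \<le> 1 \<and> \<bar>e n\<bar> < r/2"
      by (auto simp: eventually_sequentially)
    have bnd: "\<bar>y n\<bar> \<le> \<bar>y N\<bar> + r/2 * (real n - real N)" if "n \<ge> N" for n
      using that
    proof (induction n rule: dec_induct)
      case base then show ?case by simp
    next
      case (step k)
      have "\<bar>y (Suc k)\<bar> \<le> \<bar>f k\<bar> * \<bar>y k\<bar> + \<bar>e k\<bar>"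
        unfolding yrec by (metis abs_mult abs_triangle_ineq)
      also have "\<dots> \<le> \<bar>y k\<bar> + r/2"
        using N[OF step(1)] by (intro add_mono mult_left_le_one_le) auto
      finally show ?case using step by (simp add: field_simps)
    qed
    obtain N2 :: nat where N2: "real N2 > 2 * \<bar>y N\<bar> / r" using reals_Archimedean2 by blast
    show "\<exists>no. \<forall>n\<ge>no. norm (y n / real n - 0) < r"
    proof (intro exI allI impI)
      fix n assume n: "n \<ge> max (Suc N) N2"
      then have npos: "real n > 0" and nN: "n \<ge> N" by auto
      have "\<bar>y n\<bar> \<le> \<bar>y N\<bar> + r/2 * (real n - real N)" using bnd nN by blast
      also have "\<dots> \<le> \<bar>y N\<bar> + r/2 * real n" using r by simp
      also have "\<dots> < r/2 * real n + r/2 * real n"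
      proof -
        have "2 * \<bar>y N\<bar> / r < real n" using N2 n by auto
        then have "2 * \<bar>y N\<bar> < r * real n" using r by (simp add: field_simps)
        then show ?thesis by simp
      qed
      finally have "\<bar>y n\<bar> < r * real n" by simp
      then show "norm (y n / real n - 0) < r" using npos by (simp add: abs_div field_simps)
    qed
  qed
  have "(\<lambda>n. y n / real n + c) \<longlonglongrightarrow> 0 + c" by (intro tendsto_intros y0)
  moreover have "eventually (\<lambda>n. y n / real n + c = x n / real n) sequentially"
    unfolding y_def using eventually_gt_at_top[of 0] by eventually_elim (auto simp: field_simps)
  ultimately show ?thesis unfolding c_def using tendsto_cong by fastforce
qed

fun Aprod :: "real \<Rightarrow> (nat \<Rightarrow> nat \<Rightarrow> real) \<Rightarrow> nat \<Rightarrow> nat \<Rightarrow> real" where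
  "Aprod c t n 0 = 1"
| "Aprod c t n (Suc j) = (1 - c * t n j) * Aprod c t n j"

fun Bsum :: "real \<Rightarrow> (nat \<Rightarrow> nat \<Rightarrow> real) \<Rightarrow> (nat \<Rightarrow> nat \<Rightarrow> real) \<Rightarrow> nat \<Rightarrow> nat \<Rightarrow> real" where
  "Bsum c t g n 0 = 0"
| "Bsum c t g n (Suc j) = (1 - c * t n j) * Bsum c t g n j + g n j"

lemma div_n_tendsto0: "(\<lambda>n. u n) \<longlonglongrightarrow> (l::real) \<Longrightarrow> (\<lambda>n. u n / real n) \<longlonglongrightarrow> 0"
proof -
  assume "(\<lambda>n. u n) \<longlonglongrightarrow> l"
  then have "(\<lambda>n. u n * inverse (real n)) \<longlonglongrightarrow> l * 0" by (intro tendsto_intros lim_inverse_n)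
  then show ?thesis by (simp add: divide_inverse)
qed

lemma step_limit:
  fixes x t g :: "nat \<Rightarrow> nat \<Rightarrow> real" and c s \<gamma> \<delta> :: real and m :: nat
  assumes rec: "\<And>n j. j < m \<Longrightarrow> x n (Suc j) = (1 - c * t n j) * x n j + g n j"
    and ins: "\<And>n. x (Suc n) 0 = x n m + \<delta>"
    and tl: "\<And>j. j < m \<Longrightarrow> (\<lambda>n. real n * t n j) \<longlonglongrightarrow> s"
    and tb: "\<And>j. j < m \<Longrightarrow> eventually (\<lambda>n. 0 \<le> c * t n j \<and> c * t n j \<le> 1) sequentially"
    and gl: "\<And>j. j < m \<Longrightarrow> (\<lambda>n. g n j) \<longlonglongrightarrow> \<gamma>"
    and nz: "1 + c * s * real m \<noteq> 0"
    and jm: "j \<le> m"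
  shows "(\<lambda>n. x n j / real n) \<longlonglongrightarrow> (real m * \<gamma> + \<delta>) / (1 + c * s * real m)"
proof -
  have t0: "(\<lambda>n. t n j) \<longlonglongrightarrow> 0" if "j < m" for j
  proof -
    have "(\<lambda>n. (real n * t n j) * inverse (real n)) \<longlonglongrightarrow> s * 0"
      by (intro tendsto_intros tl that lim_inverse_n)
    then have "(\<lambda>n. (real n * t n j) * inverse (real n)) \<longlonglongrightarrow> 0" by simp
    moreover have "eventually (\<lambda>n. (real n * t n j) * inverse (real n) = t n j) sequentially"
      using eventually_gt_at_top[of 0] by eventually_elim auto
    ultimately show ?thesis by (rule Lim_transform_eventually)
  qed
  have xAB: "x n k = Aprod c t n k * x n 0 + Bsum c t g n k" if "k \<le> m" for n k
    using that
  proof (induction k)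
    case (Suc k)
    then have "k < m" by simp
    then show ?case using Suc by (simp only: rec Aprod.simps Bsum.simps) (simp add: algebra_simps)
  qed simp
  have lims: "(\<lambda>n. real n * (1 - Aprod c t n k)) \<longlonglongrightarrow> c * s * real k \<and>
      (\<lambda>n. Aprod c t n k) \<longlonglongrightarrow> 1 \<and> (\<lambda>n. Bsum c t g n k) \<longlonglongrightarrow> real k * \<gamma>" if "k \<le> m" for k
    using that
  proof (induction k)
    case 0 then show ?case by simp
  next
    case (Suc k)
    then have IH: "(\<lambda>n. real n * (1 - Aprod c t n k)) \<longlonglongrightarrow> c * s * real k"
      "(\<lambda>n. Aprod c t n k) \<longlonglongrightarrow> 1" "(\<lambda>n. Bsum c t g n k) \<longlonglongrightarrow> real k * \<gamma>"
      and k: "k < m" by auto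
    have "(\<lambda>n. real n * (1 - Aprod c t n k) + c * (real n * t n k) * Aprod c t n k)
        \<longlonglongrightarrow> c * s * real k + c * s * 1"
      by (intro tendsto_intros IH tl k)
    moreover have "real n * (1 - Aprod c t n (Suc k)) =
        real n * (1 - Aprod c t n k) + c * (real n * t n k) * Aprod c t n k" for n
      by (simp add: algebra_simps)
    ultimately have 1: "(\<lambda>n. real n * (1 - Aprod c t n (Suc k))) \<longlonglongrightarrow> c * s * real (Suc k)"
      by (simp add: algebra_simps)
    have "(\<lambda>n. (1 - c * t n k) * Aprod c t n k) \<longlonglongrightarrow> (1 - c * 0) * 1"
      by (intro tendsto_intros IH t0 k)
    then have 2: "(\<lambda>n. Aprod c t n (Suc k)) \<longlonglongrightarrow> 1" by simp
    have "(\<lambda>n. (1 - c * t n k) * Bsum c t g n k + g n k) \<longlonglongrightarrow> (1 - c * 0) * (real k * \<gamma>) + \<gamma>"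
      by (intro tendsto_intros IH t0 gl k)
    then have 3: "(\<lambda>n. Bsum c t g n (Suc k)) \<longlonglongrightarrow> real (Suc k) * \<gamma>" by (simp add: algebra_simps)
    show ?case using 1 2 3 by blast
  qed
  have ev: "eventually (\<lambda>n. \<forall>j\<in>{..<m}. 0 \<le> c * t n j \<and> c * t n j \<le> 1) sequentially"
    by (rule eventually_ball_finite) (auto intro: tb)
  have Ab: "eventually (\<lambda>n. \<bar>Aprod c t n m\<bar> \<le> 1) sequentially"
    using ev
  proof eventually_elim
    case (elim n)
    have "k \<le> m \<Longrightarrow> 0 \<le> Aprod c t n k \<and> Aprod c t n k \<le> 1" for k
    proof (induction k)
      case 0 then show ?case by simp
    next
      case (Suc k)
      then have h: "0 \<le> c * t n k" "c * t n k \<le> 1" using elim by auto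
      from Suc have "0 \<le> Aprod c t n k \<and> Aprod c t n k \<le> 1" by simp
      then show ?case using h by (auto intro: mult_nonneg_nonneg mult_le_one)
    qed
    then show ?case by auto
  qed
  have x0: "(\<lambda>n. x n 0 / real n) \<longlonglongrightarrow> (real m * \<gamma> + \<delta>) / (1 + c * s * real m)"
  proof (rule lin_rec_limit[where f = "\<lambda>n. Aprod c t n m" and b = "\<lambda>n. Bsum c t g n m + \<delta>"])
    show "x (Suc n) 0 = Aprod c t n m * x n 0 + (Bsum c t g n m + \<delta>)" for n
      using ins xAB[of m n] by simp
    show "(\<lambda>n. Bsum c t g n m + \<delta>) \<longlonglongrightarrow> real m * \<gamma> + \<delta>"
      using lims[of m] by (intro tendsto_intros) auto
    show "eventually (\<lambda>n. \<bar>Aprod c t n m\<bar> \<le> 1) sequentially" by (rule Ab)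
    show "(\<lambda>n. real n * (1 - Aprod c t n m)) \<longlonglongrightarrow> c * s * real m" using lims[of m] by simp
    show "1 + c * s * real m \<noteq> 0" by (rule nz)
  qed
  have "(\<lambda>n. Aprod c t n j * (x n 0 / real n) + Bsum c t g n j / real n) \<longlonglongrightarrow>
      1 * ((real m * \<gamma> + \<delta>) / (1 + c * s * real m)) + 0"
    using lims[OF jm] by (intro tendsto_intros x0 div_n_tendsto0[where l = "real j * \<gamma>"]) auto
  moreover have "x n j / real n = Aprod c t n j * (x n 0 / real n) + Bsum c t g n j / real n" for n
    using xAB[OF jm, of n] by (simp add: add_divide_distrib)
  ultimately show ?thesis by simp
qed




lemma M_props:
  fixes ds :: "nat list"
  defines "M \<equiv> (\<Sum>i<length ds. replicate_mset (ds ! i + 1) i)"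
  shows "i \<in># M \<Longrightarrow> i < length ds" and "ds \<noteq> [] \<Longrightarrow> M \<noteq> {#}"
proof -
  have cnt: "count M i = (if i < length ds then ds!i + 1 else 0)" for i
    unfolding M_def count_sum count_replicate_mset by (auto simp: sum.delta)
  show "i \<in># M \<Longrightarrow> i < length ds" using cnt[of i] by (metis count_eq_zero_iff)
  show "M \<noteq> {#}" if "ds \<noteq> []"
  proof
    assume "M = {#}"
    then have "count M 0 = 0" by simp
    with cnt[of 0] that show False by simp
  qed
qed

lemma set_pa_choose:
  assumes "ds \<noteq> []" "x \<in> set_pmf (pa_choose ds)"
  shows "\<exists>i<length ds. x = ds[i := ds!i + 1]"
proof -
  define M where "M = (\<Sum>i<length ds. replicate_mset (ds ! i + 1) i)"
  have ne: "M \<noteq> {#}" unfolding M_def by (rule M_props(2)[OF assms(1)])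
  have "set_pmf (pa_choose ds) = (\<lambda>i. ds[i := ds!i + 1]) ` set_mset M"
    unfolding pa_choose_def M_def[symmetric] using ne by simp
  then obtain i where "i \<in># M" "x = ds[i := ds!i + 1]" using assms(2) by auto
  moreover have "i < length ds" using calculation(1) unfolding M_def by (rule M_props(1))
  ultimately show ?thesis by blast
qed

lemma set_pa_choose_len:
  assumes "ds \<noteq> []" "x \<in> set_pmf (pa_choose ds)"
  shows "length x = length ds \<and> sum_list x = sum_list ds + 1"
proof -
  obtain i where i: "i < length ds" "x = ds[i := ds!i + 1]" using set_pa_choose[OF assms] by blast
  have "ds ! i \<le> sum_list ds" using i(1) by (rule elem_le_sum_list)
  then show ?thesis using i sum_list_update[OF i(1), of "ds!i + 1"] by simp
qed

lemma finite_pa_choose: "ds \<noteq> [] \<Longrightarrow> finite (set_pmf (pa_choose ds))"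
  by (rule finite_subset[of _ "(\<lambda>i. ds[i := ds!i + 1]) ` {..<length ds}"]) (auto dest: set_pa_choose)

lemma iter0: "pa_choose_iter 0 = return_pmf" by (rule ext) simp

lemma iter_Suc': "pa_choose_iter (Suc k) ds = bind_pmf (pa_choose_iter k ds) pa_choose"
proof (induction k arbitrary: ds)
  case 0 then show ?case by (simp add: bind_return_pmf bind_return_pmf' iter0)
next
  case (Suc k)
  have "pa_choose_iter (Suc (Suc k)) ds = bind_pmf (pa_choose ds) (pa_choose_iter (Suc k))" by simp
  also have "\<dots> = bind_pmf (pa_choose ds) (\<lambda>x. bind_pmf (pa_choose_iter k x) pa_choose)"
  proof -
    have "pa_choose_iter (Suc k) = (\<lambda>x. bind_pmf (pa_choose_iter k x) pa_choose)"
      by (rule ext, rule Suc.IH)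
    then show ?thesis by simp
  qed
  also have "\<dots> = bind_pmf (bind_pmf (pa_choose ds) (pa_choose_iter k)) pa_choose"
    by (simp add: bind_assoc_pmf)
  finally show ?case by simp
qed

definition Dst :: "nat \<Rightarrow> nat \<Rightarrow> nat \<Rightarrow> nat list pmf" where
  "Dst m n j = bind_pmf (pa_circuit m n) (pa_choose_iter j)"

lemma Dst_0: "Dst m n 0 = pa_circuit m n"
  unfolding Dst_def iter0 by (simp add: bind_return_pmf')

lemma Dst_Suc: "Dst m n (Suc j) = bind_pmf (Dst m n j) pa_choose"
  unfolding Dst_def iter_Suc' by (simp add: bind_assoc_pmf)

lemma circ_Suc: "pa_circuit m (Suc n) = map_pmf (\<lambda>ds. ds @ [0]) (Dst m n m)"
  unfolding Dst_def by (simp add: map_bind_pmf pa_step_def[abs_def])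

lemma bind_choose_props:
  assumes fin: "finite (set_pmf p)" and pr: "\<forall>ds\<in>set_pmf p. length ds = L \<and> sum_list ds = S" and L: "L > 0"
  shows "finite (set_pmf (bind_pmf p pa_choose)) \<and>
     (\<forall>ds\<in>set_pmf (bind_pmf p pa_choose). length ds = L \<and> sum_list ds = S + 1)"
proof
  have ne: "x \<in> set_pmf p \<Longrightarrow> x \<noteq> []" for x using pr L by auto
  show "finite (set_pmf (bind_pmf p pa_choose))"
    unfolding set_bind_pmf using fin by (auto intro!: finite_pa_choose ne)
  show "\<forall>ds\<in>set_pmf (bind_pmf p pa_choose). length ds = L \<and> sum_list ds = S + 1"
  proof
    fix ds assume "ds \<in> set_pmf (bind_pmf p pa_choose)"
    then obtain x where x: "x \<in> set_pmf p" "ds \<in> set_pmf (pa_choose x)" by auto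
    show "length ds = L \<and> sum_list ds = S + 1"
      using set_pa_choose_len[OF ne[OF x(1)] x(2)] pr x(1) by auto
  qed
qed

lemma Dst_props: "finite (set_pmf (Dst m n j)) \<and>
   (\<forall>ds\<in>set_pmf (Dst m n j). length ds = n + 1 \<and> sum_list ds = n * m + j)"
proof (induction n arbitrary: j)
  case 0
  show ?case
  proof (induction j)
    case 0 then show ?case by (simp add: Dst_0)
  next
    case (Suc j)
    then show ?case unfolding Dst_Suc using bind_choose_props[of "Dst m 0 j" 1 j] by simp
  qed
next
  case (Suc n)
  have base: "finite (set_pmf (Dst m (Suc n) 0)) \<and>
   (\<forall>ds\<in>set_pmf (Dst m (Suc n) 0). length ds = Suc n + 1 \<and> sum_list ds = Suc n * m + 0)"
    using Suc.IH[of m] unfolding Dst_0 circ_Suc by auto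
  show ?case
  proof (induction j)
    case 0 then show ?case using base by simp
  next
    case (Suc j)
    then show ?case unfolding Dst_Suc using bind_choose_props[of "Dst m (Suc n) j" "Suc n + 1" "Suc n * m + j"] by simp
  qed
qed

lemma E_bind:
  fixes h :: "'b \<Rightarrow> real"
  assumes fin: "finite (set_pmf p)" and fin2: "\<And>x. x \<in> set_pmf p \<Longrightarrow> finite (set_pmf (f x))"
  shows "measure_pmf.expectation (bind_pmf p f) h =
         measure_pmf.expectation p (\<lambda>x. measure_pmf.expectation (f x) h)"
proof -
  have "measure_pmf.expectation (bind_pmf p f) h =
      (\<Sum>a\<in>set_pmf p. pmf p a *\<^sub>R measure_pmf.expectation (f a) h)"
    by (rule pmf_expectation_bind[OF fin fin2]) auto
  also have "\<dots> = measure_pmf.expectation p (\<lambda>x. measure_pmf.expectation (f x) h)"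
    by (rule integral_measure_pmf[OF fin, symmetric])
  finally show ?thesis .
qed




definition EE :: "nat \<Rightarrow> nat \<Rightarrow> nat \<Rightarrow> (real \<Rightarrow> real \<Rightarrow> real) \<Rightarrow> real" where
  "EE m n j F = measure_pmf.expectation (Dst m n j) (\<lambda>x. F (cR 0 x) (cR 1 x))"

definition wt :: "nat \<Rightarrow> nat \<Rightarrow> nat \<Rightarrow> real" where
  "wt m n j = real ((m + 1) * n + 1 + j)"

lemma integrable_Dst [simp]: "integrable (measure_pmf (Dst m n j)) (f :: nat list \<Rightarrow> real)"
  using Dst_props[of m n j] by (intro integrable_measure_pmf_finite) simp

lemma EE_add: "EE m n j (\<lambda>a b. F a b + G a b) = EE m n j F + EE m n j G"
  unfolding EE_def by (simp add: Bochner_Integration.integral_add)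

lemma EE_diff: "EE m n j (\<lambda>a b. F a b - G a b) = EE m n j F - EE m n j G"
  unfolding EE_def by (simp add: Bochner_Integration.integral_diff)

lemma EE_cmult: "EE m n j (\<lambda>a b. c * F a b) = c * EE m n j F"
  unfolding EE_def by simp

lemma EE_const: "EE m n j (\<lambda>a b. c) = c"
  unfolding EE_def by simp

lemma EE_Suc:
  "EE m n (Suc j) F = EE m n j (\<lambda>a b. (a * F (a - 1) (b + 1) + 2 * b * F a (b - 1)
      + (wt m n j - a - 2 * b) * F a b) / wt m n j)"
proof -
  have pr: "finite (set_pmf (Dst m n j))"
    "\<And>ds. ds \<in> set_pmf (Dst m n j) \<Longrightarrow> length ds = n + 1 \<and> sum_list ds = n * m + j"
    using Dst_props[of m n j] by auto
  have ne: "ds \<in> set_pmf (Dst m n j) \<Longrightarrow> ds \<noteq> []" for ds using pr(2)[of ds] by auto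
  have "EE m n (Suc j) F = measure_pmf.expectation (Dst m n j)
      (\<lambda>ds. measure_pmf.expectation (pa_choose ds) (\<lambda>x. F (cR 0 x) (cR 1 x)))"
    unfolding EE_def Dst_Suc by (rule E_bind[OF pr(1) finite_pa_choose[OF ne]])
  also have "\<dots> = EE m n j (\<lambda>a b. (a * F (a - 1) (b + 1) + 2 * b * F a (b - 1)
      + (wt m n j - a - 2 * b) * F a b) / wt m n j)"
    unfolding EE_def
  proof (intro integral_cong_AE)
    show "AE x in measure_pmf (Dst m n j).
      measure_pmf.expectation (pa_choose x) (\<lambda>x. F (cR 0 x) (cR 1 x)) =
      (cR 0 x * F (cR 0 x - 1) (cR 1 x + 1) + 2 * cR 1 x * F (cR 0 x) (cR 1 x - 1) +
       (wt m n j - cR 0 x - 2 * cR 1 x) * F (cR 0 x) (cR 1 x)) / wt m n j"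
      unfolding AE_measure_pmf_iff
    proof
      fix x assume x: "x \<in> set_pmf (Dst m n j)"
      have "WR x = wt m n j" using pr(2)[OF x] unfolding wt_def by (simp add: algebra_simps)
      then show "measure_pmf.expectation (pa_choose x) (\<lambda>x. F (cR 0 x) (cR 1 x)) =
      (cR 0 x * F (cR 0 x - 1) (cR 1 x + 1) + 2 * cR 1 x * F (cR 0 x) (cR 1 x - 1) +
       (wt m n j - cR 0 x - 2 * cR 1 x) * F (cR 0 x) (cR 1 x)) / wt m n j"
        using E_choose[OF ne[OF x], of F] by simp
    qed
  qed auto
  finally show ?thesis .
qed

lemma cR_snoc0: "cR k (ds @ [0]) = cR k ds + (if k = 0 then 1 else 0)"
  unfolding outdeg_count_def by auto

lemma EE_ins: "EE m (Suc n) 0 F = EE m n m (\<lambda>a b. F (a + 1) b)"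
  unfolding EE_def Dst_0 circ_Suc by (simp add: cR_snoc0)

lemma wt_pos: "wt m n j > 0" unfolding wt_def by (intro of_nat_0_less_iff[THEN iffD2]) simp

definition "mu0 m n j = EE m n j (\<lambda>a b. a)"
definition "mu1 m n j = EE m n j (\<lambda>a b. b)"
definition "s00 m n j = EE m n j (\<lambda>a b. a * a)"
definition "s01 m n j = EE m n j (\<lambda>a b. a * b)"
definition "s11 m n j = EE m n j (\<lambda>a b. b * b)"

lemma mu0_Suc: "mu0 m n (Suc j) = (1 - 1 / wt m n j) * mu0 m n j"
proof -
  have "(\<lambda>a b. (a * (a - 1) + 2 * b * a + (wt m n j - a - 2 * b) * a) / wt m n j) =
        (\<lambda>a b. (1 - 1 / wt m n j) * a)"
    using wt_pos[of m n j] by (intro ext) (simp add: field_simps)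
  then show ?thesis unfolding mu0_def EE_Suc by (simp only: EE_cmult)
qed

lemma mu1_Suc: "mu1 m n (Suc j) = (1 - 2 / wt m n j) * mu1 m n j + (1 / wt m n j) * mu0 m n j"
proof -
  have "(\<lambda>a b. (a * (b + 1) + 2 * b * (b - 1) + (wt m n j - a - 2 * b) * b) / wt m n j) =
        (\<lambda>a b. (1 - 2 / wt m n j) * b + (1 / wt m n j) * a)"
    using wt_pos[of m n j] by (intro ext) (simp add: field_simps)
  then show ?thesis unfolding mu0_def mu1_def EE_Suc by (simp only: EE_cmult EE_add)
qed

lemma s00_Suc: "s00 m n (Suc j) = (1 - 2 / wt m n j) * s00 m n j + (1 / wt m n j) * mu0 m n j"
proof -
  have "(\<lambda>a b. (a * ((a - 1) * (a - 1)) + 2 * b * (a * a) + (wt m n j - a - 2 * b) * (a * a)) / wt m n j) =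
        (\<lambda>a b. (1 - 2 / wt m n j) * (a * a) + (1 / wt m n j) * a)"
    using wt_pos[of m n j] by (intro ext) (simp add: field_simps)
  then show ?thesis unfolding mu0_def s00_def EE_Suc by (simp only: EE_cmult EE_add)
qed

lemma s01_Suc: "s01 m n (Suc j) = (1 - 3 / wt m n j) * s01 m n j + (1 / wt m n j) * s00 m n j
   - (1 / wt m n j) * mu0 m n j"
proof -
  have "(\<lambda>a b. (a * ((a - 1) * (b + 1)) + 2 * b * (a * (b - 1)) + (wt m n j - a - 2 * b) * (a * b)) / wt m n j) =
        (\<lambda>a b. (1 - 3 / wt m n j) * (a * b) + (1 / wt m n j) * (a * a) - (1 / wt m n j) * a)"
    using wt_pos[of m n j] by (intro ext) (simp add: field_simps)
  then show ?thesis unfolding mu0_def s00_def s01_def EE_Suc by (simp only: EE_cmult EE_add EE_diff)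
qed

lemma s11_Suc: "s11 m n (Suc j) = (1 - 4 / wt m n j) * s11 m n j + (2 / wt m n j) * s01 m n j
   + (1 / wt m n j) * mu0 m n j + (2 / wt m n j) * mu1 m n j"
proof -
  have "(\<lambda>a b. (a * ((b + 1) * (b + 1)) + 2 * b * ((b - 1) * (b - 1)) + (wt m n j - a - 2 * b) * (b * b)) / wt m n j) =
        (\<lambda>a b. (1 - 4 / wt m n j) * (b * b) + (2 / wt m n j) * (a * b) + (1 / wt m n j) * a + (2 / wt m n j) * b)"
    using wt_pos[of m n j] by (intro ext) (simp add: field_simps)
  then show ?thesis unfolding mu0_def mu1_def s01_def s11_def EE_Suc by (simp only: EE_cmult EE_add EE_diff)
qed

lemma ins_lemmas:
  "mu0 m (Suc n) 0 = mu0 m n m + 1"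
  "mu1 m (Suc n) 0 = mu1 m n m"
  "s00 m (Suc n) 0 = s00 m n m + 2 * mu0 m n m + 1"
  "s01 m (Suc n) 0 = s01 m n m + mu1 m n m"
  "s11 m (Suc n) 0 = s11 m n m"
proof -
  have 1: "(\<lambda>(a::real) (b::real). (a + 1) * (a + 1)) = (\<lambda>a b. a * a + 2 * a + 1)" by (intro ext) (simp add: algebra_simps)
  have 2: "(\<lambda>(a::real) (b::real). (a + 1) * b) = (\<lambda>a b. a * b + b)" by (intro ext) (simp add: algebra_simps)
  show "mu0 m (Suc n) 0 = mu0 m n m + 1" unfolding mu0_def EE_ins by (simp add: EE_add EE_const)
  show "mu1 m (Suc n) 0 = mu1 m n m" unfolding mu1_def EE_ins by simp
  show "s00 m (Suc n) 0 = s00 m n m + 2 * mu0 m n m + 1" unfolding mu0_def s00_def EE_ins 1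
    by (simp add: EE_add EE_const EE_cmult)
  show "s01 m (Suc n) 0 = s01 m n m + mu1 m n m" unfolding mu1_def s01_def EE_ins 2
    by (simp add: EE_add)
  show "s11 m (Suc n) 0 = s11 m n m" unfolding s11_def EE_ins by simp
qed

definition "tt m n j = 1 / wt m n j"
definition "V00 m n j = s00 m n j - mu0 m n j ^ 2"
definition "V01 m n j = s01 m n j - mu0 m n j * mu1 m n j"
definition "V11 m n j = s11 m n j - mu1 m n j ^ 2"

lemma mu0_rec: "mu0 m n (Suc j) = (1 - 1 * tt m n j) * mu0 m n j + 0"
  by (simp add: mu0_Suc tt_def)
lemma mu1_rec: "mu1 m n (Suc j) = (1 - 2 * tt m n j) * mu1 m n j + tt m n j * mu0 m n j"
  by (simp add: mu1_Suc tt_def)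
lemma V00_rec: "V00 m n (Suc j) = (1 - 2 * tt m n j) * V00 m n j +
    (tt m n j * mu0 m n j - (tt m n j * mu0 m n j) * (tt m n j * mu0 m n j))"
  unfolding V00_def mu0_Suc s00_Suc tt_def by (simp add: algebra_simps power2_eq_square)
lemma V01_rec: "V01 m n (Suc j) = (1 - 3 * tt m n j) * V01 m n j +
    (tt m n j * V00 m n j - tt m n j * mu0 m n j - 2 * (tt m n j * mu0 m n j) * (tt m n j * mu1 m n j)
     + (tt m n j * mu0 m n j) * (tt m n j * mu0 m n j))"
  unfolding V01_def V00_def mu0_Suc mu1_Suc s01_Suc tt_def by (simp add: algebra_simps power2_eq_square)
lemma V11_rec: "V11 m n (Suc j) = (1 - 4 * tt m n j) * V11 m n j +
    (2 * (tt m n j * V01 m n j) + tt m n j * mu0 m n j + 2 * (tt m n j * mu1 m n j)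
     - 4 * (tt m n j * mu1 m n j) * (tt m n j * mu1 m n j)
     + 4 * (tt m n j * mu0 m n j) * (tt m n j * mu1 m n j)
     - (tt m n j * mu0 m n j) * (tt m n j * mu0 m n j))"
  unfolding V11_def V01_def mu0_Suc mu1_Suc s11_Suc tt_def by (simp add: algebra_simps power2_eq_square)

lemma ins_rec:
  "mu0 m (Suc n) 0 = mu0 m n m + 1" "mu1 m (Suc n) 0 = mu1 m n m + 0"
  "V00 m (Suc n) 0 = V00 m n m + 0" "V01 m (Suc n) 0 = V01 m n m + 0" "V11 m (Suc n) 0 = V11 m n m + 0"
  by (simp_all add: ins_lemmas V00_def V01_def V11_def algebra_simps power2_eq_square)

lemma cov_eq:
  fixes X Y :: "'a \<Rightarrow> real"
  assumes "finite (set_pmf p)"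
  shows "pmf_cov p X Y = measure_pmf.expectation p (\<lambda>x. X x * Y x)
     - measure_pmf.expectation p X * measure_pmf.expectation p Y"
proof -
  have int: "integrable (measure_pmf p) f" for f :: "'a \<Rightarrow> real"
    using assms by (rule integrable_measure_pmf_finite)
  define a where "a = measure_pmf.expectation p X"
  define b where "b = measure_pmf.expectation p Y"
  have "pmf_cov p X Y = measure_pmf.expectation p (\<lambda>x. (X x * Y x - b * X x) - (a * Y x - a * b))"
    unfolding pmf_cov_def a_def[symmetric] b_def[symmetric] by (simp add: algebra_simps)
  also have "\<dots> = measure_pmf.expectation p (\<lambda>x. X x * Y x) - b * a - (a * b - a * b)"
    by (simp add: int Bochner_Integration.integral_diff a_def b_def)
  finally show ?thesis by (simp add: a_def b_def)
qed

lemma Ycov_V: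
  "Y_cov m n 0 0 = V00 m n 0" "Y_cov m n 0 1 = V01 m n 0"
  "Y_cov m n 1 0 = V01 m n 0" "Y_cov m n 1 1 = V11 m n 0"
proof -
  have fin: "finite (set_pmf (pa_circuit m n))" using Dst_props[of m n 0] by (simp add: Dst_0)
  show "Y_cov m n 0 0 = V00 m n 0" "Y_cov m n 0 1 = V01 m n 0"
    "Y_cov m n 1 0 = V01 m n 0" "Y_cov m n 1 1 = V11 m n 0"
    unfolding Y_cov_def cov_eq[OF fin] V00_def V01_def V11_def s00_def s01_def s11_def mu0_def mu1_def
      EE_def Dst_0 by (simp_all add: power2_eq_square mult.commute)
qed




lemma tt_lim: "(\<lambda>n. real n * tt m n j) \<longlonglongrightarrow> 1 / (real m + 1)"
proof -
  have "(\<lambda>n. 1 / ((real m + 1) + real (1 + j) * inverse (real n))) \<longlonglongrightarrow> 1 / ((real m + 1) + real (1 + j) * 0)"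
    by (intro tendsto_intros lim_inverse_n) simp
  moreover have "eventually (\<lambda>n. 1 / ((real m + 1) + real (1 + j) * inverse (real n)) = real n * tt m n j) sequentially"
    using eventually_gt_at_top[of 0]
  proof eventually_elim
    case (elim n)
    then show ?case unfolding tt_def wt_def by (simp add: field_simps)
  qed
  ultimately show ?thesis by (simp add: Lim_transform_eventually)
qed

lemma tt_bnd:
  assumes "m \<ge> 2" "0 \<le> c" "c \<le> 4"
  shows "eventually (\<lambda>n. 0 \<le> c * tt m n j \<and> c * tt m n j \<le> 1) sequentially"
  using eventually_gt_at_top[of 0]
proof eventually_elim
  case (elim n)
  have "real ((m + 1) * n + 1 + j) \<ge> 4"
  proof -
    have "(m + 1) * n \<ge> 3 * 1" by (rule mult_le_mono) (use assms(1) elim in auto)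
    then have "4 \<le> (m + 1) * n + 1 + j" by simp
    then have "real 4 \<le> real ((m + 1) * n + 1 + j)" by (rule of_nat_mono)
    then show ?thesis by simp
  qed
  then have w: "wt m n j \<ge> 4" unfolding wt_def by simp
  then have "c / wt m n j \<le> 1" using assms by (simp add: divide_le_eq)
  moreover have "0 \<le> c / wt m n j" using assms w by simp
  ultimately show ?case unfolding tt_def by simp
qed

lemma prod_lim:
  assumes "(\<lambda>n. x n / real n) \<longlonglongrightarrow> l"
  shows "(\<lambda>n. tt m n j * x n) \<longlonglongrightarrow> 1 / (real m + 1) * l"
proof -
  have "(\<lambda>n. (real n * tt m n j) * (x n / real n)) \<longlonglongrightarrow> 1 / (real m + 1) * l"
    by (intro tendsto_intros tt_lim assms)
  moreover have "eventually (\<lambda>n. (real n * tt m n j) * (x n / real n) = tt m n j * x n) sequentially"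
    using eventually_gt_at_top[of 0] by eventually_elim auto
  ultimately show ?thesis by (rule Lim_transform_eventually)
qed

lemma cf_all:
  fixes x :: real assumes "x \<ge> 2"
  defines "s \<equiv> 1/(x+1)" and "a \<equiv> (x+1)/(2*x+1)"
    and "b \<equiv> x * (x + 1) / ((2 * x + 1) * (3 * x + 1))"
    and "v0 \<equiv> 2 * x ^ 2 * (x + 1) / ((3 * x + 1) * (2 * x + 1) ^ 2)"
    and "v1 \<equiv> - (4 * (x + 1) ^ 2 * x ^ 2 / ((4 * x + 1) * (3 * x + 1) * (2 * x + 1) ^ 2))"
    and "v2 \<equiv> 2 * x ^ 2 * (x + 1) * (48 * x ^ 3 + 59 * x ^ 2 + 27 * x + 4)
             / ((5 * x + 1) * (4 * x + 1) * (3 * x + 1) ^ 2 * (2 * x + 1) ^ 2)"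
  shows "(x * 0 + 1) / (1 + 1 * s * x) = a"
   "(x * (s * a) + 0) / (1 + 2 * s * x) = b"
   "(x * (s * a - s * a * (s * a)) + 0) / (1 + 2 * s * x) = v0"
   "(x * (s * v0 - s * a - 2 * (s * a) * (s * b) + s * a * (s * a)) + 0) / (1 + 3 * s * x) = v1"
   "(x * (2 * (s * v1) + s * a + 2 * (s * b) - 4 * (s * b) * (s * b)
          + 4 * (s * a) * (s * b) - s * a * (s * a)) + 0) / (1 + 4 * s * x) = v2"
proof -
  have p: "x + 1 > 0" "2*x+1 > 0" "3*x+1>0" "4*x+1>0" "5*x+1>0" using assms by auto
  show "(x * 0 + 1) / (1 + 1 * s * x) = a"
   "(x * (s * a) + 0) / (1 + 2 * s * x) = b"
   "(x * (s * a - s * a * (s * a)) + 0) / (1 + 2 * s * x) = v0"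
   "(x * (s * v0 - s * a - 2 * (s * a) * (s * b) + s * a * (s * a)) + 0) / (1 + 3 * s * x) = v1"
   "(x * (2 * (s * v1) + s * a + 2 * (s * b) - 4 * (s * b) * (s * b)
          + 4 * (s * a) * (s * b) - s * a * (s * a)) + 0) / (1 + 4 * s * x) = v2"
    unfolding s_def a_def b_def v0_def v1_def v2_def using p by (simp_all add: divide_simps; algebra)+
qed

theorem corollary1:
  fixes m :: nat
  assumes "m \<ge> 2"
  shows "((\<lambda>n. Y_cov m n 0 0 / real n) \<longlonglongrightarrow>
           2 * real m ^ 2 * (real m + 1) / ((3 * real m + 1) * (2 * real m + 1) ^ 2)) \<and>
         ((\<lambda>n. Y_cov m n 0 1 / real n) \<longlonglongrightarrow>
           - (4 * (real m + 1) ^ 2 * real m ^ 2 / ((4 * real m + 1) * (3 * real m + 1) * (2 * real m + 1) ^ 2))) \<and>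
         ((\<lambda>n. Y_cov m n 1 0 / real n) \<longlonglongrightarrow>
           - (4 * (real m + 1) ^ 2 * real m ^ 2 / ((4 * real m + 1) * (3 * real m + 1) * (2 * real m + 1) ^ 2))) \<and>
         ((\<lambda>n. Y_cov m n 1 1 / real n) \<longlonglongrightarrow>
           2 * real m ^ 2 * (real m + 1) * (48 * real m ^ 3 + 59 * real m ^ 2 + 27 * real m + 4)
             / ((5 * real m + 1) * (4 * real m + 1) * (3 * real m + 1) ^ 2 * (2 * real m + 1) ^ 2))"
proof -
  let ?s = "1 / (real m + 1)"
  have m2: "real m \<ge> 2" using assms by simp
  define \<alpha> where "\<alpha> = (real m + 1) / (2 * real m + 1)"
  define \<beta> where "\<beta> = real m * (real m + 1) / ((2 * real m + 1) * (3 * real m + 1))"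
  define v0 where "v0 = 2 * real m ^ 2 * (real m + 1) / ((3 * real m + 1) * (2 * real m + 1) ^ 2)"
  define v1 where "v1 = - (4 * (real m + 1) ^ 2 * real m ^ 2 / ((4 * real m + 1) * (3 * real m + 1) * (2 * real m + 1) ^ 2))"
  define v2 where "v2 = 2 * real m ^ 2 * (real m + 1) * (48 * real m ^ 3 + 59 * real m ^ 2 + 27 * real m + 4)
             / ((5 * real m + 1) * (4 * real m + 1) * (3 * real m + 1) ^ 2 * (2 * real m + 1) ^ 2)"
  have tb: "\<And>c j. 0 \<le> c \<Longrightarrow> c \<le> 4 \<Longrightarrow> eventually (\<lambda>n. 0 \<le> c * tt m n j \<and> c * tt m n j \<le> 1) sequentially"
    using tt_bnd[OF assms] by blast
  have pos: "1 + c * ?s * real m \<noteq> 0" if "c \<ge> 0" for c :: real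
  proof -
    have "0 \<le> c * ?s * real m" using that by simp
    then show ?thesis by linarith
  qed
  have L0: "(\<lambda>n. mu0 m n j / real n) \<longlonglongrightarrow> \<alpha>" if "j \<le> m" for j
  proof -
    have "(\<lambda>n. mu0 m n j / real n) \<longlonglongrightarrow> (real m * 0 + 1) / (1 + 1 * ?s * real m)"
    proof (rule step_limit[where x = "mu0 m" and t = "tt m" and c = 1 and g = "\<lambda>n j. 0"])
      show "\<And>n j. j < m \<Longrightarrow> mu0 m n (Suc j) = (1 - 1 * tt m n j) * mu0 m n j + 0" by (rule mu0_rec)
      show "\<And>n. mu0 m (Suc n) 0 = mu0 m n m + 1" by (rule ins_rec)
      show "\<And>j. j < m \<Longrightarrow> eventually (\<lambda>n. 0 \<le> 1 * tt m n j \<and> 1 * tt m n j \<le> 1) sequentially"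
        by (rule tb) auto
      show "1 + 1 * ?s * real m \<noteq> 0" by (rule pos) simp
    qed (use that tt_lim in auto)
    moreover have "(real m * 0 + 1) / (1 + 1 * ?s * real m) = \<alpha>" unfolding \<alpha>_def by (rule cf_all(1)[OF m2])
    ultimately show ?thesis by simp
  qed
  have L1: "(\<lambda>n. mu1 m n j / real n) \<longlonglongrightarrow> \<beta>" if "j \<le> m" for j
  proof -
    have "(\<lambda>n. mu1 m n j / real n) \<longlonglongrightarrow> (real m * (?s * \<alpha>) + 0) / (1 + 2 * ?s * real m)"
    proof (rule step_limit[where x = "mu1 m" and t = "tt m" and c = 2 and g = "\<lambda>n j. tt m n j * mu0 m n j"])
      show "\<And>n j. j < m \<Longrightarrow> mu1 m n (Suc j) = (1 - 2 * tt m n j) * mu1 m n j + tt m n j * mu0 m n j" by (rule mu1_rec)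
      show "\<And>n. mu1 m (Suc n) 0 = mu1 m n m + 0" by (rule ins_rec)
      show "\<And>j. j < m \<Longrightarrow> eventually (\<lambda>n. 0 \<le> 2 * tt m n j \<and> 2 * tt m n j \<le> 1) sequentially"
        by (rule tb) auto
      show "\<And>j. j < m \<Longrightarrow> (\<lambda>n. tt m n j * mu0 m n j) \<longlonglongrightarrow> ?s * \<alpha>"
        by (rule prod_lim, rule L0) simp
    qed (use that pos tb tt_lim in auto)
    moreover have "(real m * (?s * \<alpha>) + 0) / (1 + 2 * ?s * real m) = \<beta>" unfolding \<alpha>_def \<beta>_def by (rule cf_all(2)[OF m2])
    ultimately show ?thesis by simp
  qed
  have P0: "(\<lambda>n. tt m n j * mu0 m n j) \<longlonglongrightarrow> ?s * \<alpha>" if "j < m" for j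
    by (rule prod_lim, rule L0) (use that in simp)
  have P1: "(\<lambda>n. tt m n j * mu1 m n j) \<longlonglongrightarrow> ?s * \<beta>" if "j < m" for j
    by (rule prod_lim, rule L1) (use that in simp)
  have W0: "(\<lambda>n. V00 m n j / real n) \<longlonglongrightarrow> v0" if "j \<le> m" for j
  proof -
    have "(\<lambda>n. V00 m n j / real n) \<longlonglongrightarrow> (real m * (?s * \<alpha> - ?s * \<alpha> * (?s * \<alpha>)) + 0) / (1 + 2 * ?s * real m)"
    proof (rule step_limit[where x = "V00 m" and t = "tt m" and c = 2 and
          g = "\<lambda>n j. tt m n j * mu0 m n j - (tt m n j * mu0 m n j) * (tt m n j * mu0 m n j)"])
      show "\<And>n j. j < m \<Longrightarrow> V00 m n (Suc j) = (1 - 2 * tt m n j) * V00 m n j +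
          (tt m n j * mu0 m n j - (tt m n j * mu0 m n j) * (tt m n j * mu0 m n j))" by (rule V00_rec)
      show "\<And>n. V00 m (Suc n) 0 = V00 m n m + 0" by (rule ins_rec)
      show "\<And>j. j < m \<Longrightarrow> eventually (\<lambda>n. 0 \<le> 2 * tt m n j \<and> 2 * tt m n j \<le> 1) sequentially"
        by (rule tb) auto
      show "\<And>j. j < m \<Longrightarrow> (\<lambda>n. tt m n j * mu0 m n j - (tt m n j * mu0 m n j) * (tt m n j * mu0 m n j))
          \<longlonglongrightarrow> ?s * \<alpha> - ?s * \<alpha> * (?s * \<alpha>)"
        by (intro tendsto_intros P0)
    qed (use that pos tb tt_lim in auto)
    moreover have "(real m * (?s * \<alpha> - ?s * \<alpha> * (?s * \<alpha>)) + 0) / (1 + 2 * ?s * real m) = v0"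
      unfolding \<alpha>_def v0_def by (rule cf_all(3)[OF m2])
    ultimately show ?thesis by simp
  qed
  have Q0: "(\<lambda>n. tt m n j * V00 m n j) \<longlonglongrightarrow> ?s * v0" if "j < m" for j
    by (rule prod_lim, rule W0) (use that in simp)
  have W1: "(\<lambda>n. V01 m n j / real n) \<longlonglongrightarrow> v1" if "j \<le> m" for j
  proof -
    have "(\<lambda>n. V01 m n j / real n) \<longlonglongrightarrow>
       (real m * (?s * v0 - ?s * \<alpha> - 2 * (?s * \<alpha>) * (?s * \<beta>) + ?s * \<alpha> * (?s * \<alpha>)) + 0) / (1 + 3 * ?s * real m)"
    proof (rule step_limit[where x = "V01 m" and t = "tt m" and c = 3 and
          g = "\<lambda>n j. tt m n j * V00 m n j - tt m n j * mu0 m n j - 2 * (tt m n j * mu0 m n j) * (tt m n j * mu1 m n j)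
     + (tt m n j * mu0 m n j) * (tt m n j * mu0 m n j)"])
      show "\<And>n j. j < m \<Longrightarrow> V01 m n (Suc j) = (1 - 3 * tt m n j) * V01 m n j +
    (tt m n j * V00 m n j - tt m n j * mu0 m n j - 2 * (tt m n j * mu0 m n j) * (tt m n j * mu1 m n j)
     + (tt m n j * mu0 m n j) * (tt m n j * mu0 m n j))" by (rule V01_rec)
      show "\<And>n. V01 m (Suc n) 0 = V01 m n m + 0" by (rule ins_rec)
      show "\<And>j. j < m \<Longrightarrow> eventually (\<lambda>n. 0 \<le> 3 * tt m n j \<and> 3 * tt m n j \<le> 1) sequentially"
        by (rule tb) auto
      show "\<And>j. j < m \<Longrightarrow> (\<lambda>n. tt m n j * V00 m n j - tt m n j * mu0 m n j - 2 * (tt m n j * mu0 m n j) * (tt m n j * mu1 m n j)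
     + (tt m n j * mu0 m n j) * (tt m n j * mu0 m n j))
          \<longlonglongrightarrow> ?s * v0 - ?s * \<alpha> - 2 * (?s * \<alpha>) * (?s * \<beta>) + ?s * \<alpha> * (?s * \<alpha>)"
        by (intro tendsto_intros P0 P1 Q0)
    qed (use that pos tb tt_lim in auto)
    moreover have "(real m * (?s * v0 - ?s * \<alpha> - 2 * (?s * \<alpha>) * (?s * \<beta>) + ?s * \<alpha> * (?s * \<alpha>)) + 0) / (1 + 3 * ?s * real m) = v1"
      unfolding \<alpha>_def \<beta>_def v0_def v1_def by (rule cf_all(4)[OF m2])
    ultimately show ?thesis by simp
  qed
  have Q1: "(\<lambda>n. tt m n j * V01 m n j) \<longlonglongrightarrow> ?s * v1" if "j < m" for j
    by (rule prod_lim, rule W1) (use that in simp)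
  have W2: "(\<lambda>n. V11 m n j / real n) \<longlonglongrightarrow> v2" if "j \<le> m" for j
  proof -
    have "(\<lambda>n. V11 m n j / real n) \<longlonglongrightarrow>
       (real m * (2 * (?s * v1) + ?s * \<alpha> + 2 * (?s * \<beta>) - 4 * (?s * \<beta>) * (?s * \<beta>)
          + 4 * (?s * \<alpha>) * (?s * \<beta>) - ?s * \<alpha> * (?s * \<alpha>)) + 0) / (1 + 4 * ?s * real m)"
    proof (rule step_limit[where x = "V11 m" and t = "tt m" and c = 4 and
          g = "\<lambda>n j. 2 * (tt m n j * V01 m n j) + tt m n j * mu0 m n j + 2 * (tt m n j * mu1 m n j)
     - 4 * (tt m n j * mu1 m n j) * (tt m n j * mu1 m n j)
     + 4 * (tt m n j * mu0 m n j) * (tt m n j * mu1 m n j)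
     - (tt m n j * mu0 m n j) * (tt m n j * mu0 m n j)"])
      show "\<And>n j. j < m \<Longrightarrow> V11 m n (Suc j) = (1 - 4 * tt m n j) * V11 m n j +
    (2 * (tt m n j * V01 m n j) + tt m n j * mu0 m n j + 2 * (tt m n j * mu1 m n j)
     - 4 * (tt m n j * mu1 m n j) * (tt m n j * mu1 m n j)
     + 4 * (tt m n j * mu0 m n j) * (tt m n j * mu1 m n j)
     - (tt m n j * mu0 m n j) * (tt m n j * mu0 m n j))" by (rule V11_rec)
      show "\<And>n. V11 m (Suc n) 0 = V11 m n m + 0" by (rule ins_rec)
      show "\<And>j. j < m \<Longrightarrow> eventually (\<lambda>n. 0 \<le> 4 * tt m n j \<and> 4 * tt m n j \<le> 1) sequentially"
        by (rule tb) auto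
      show "\<And>j. j < m \<Longrightarrow> (\<lambda>n. 2 * (tt m n j * V01 m n j) + tt m n j * mu0 m n j + 2 * (tt m n j * mu1 m n j)
     - 4 * (tt m n j * mu1 m n j) * (tt m n j * mu1 m n j)
     + 4 * (tt m n j * mu0 m n j) * (tt m n j * mu1 m n j)
     - (tt m n j * mu0 m n j) * (tt m n j * mu0 m n j))
          \<longlonglongrightarrow> 2 * (?s * v1) + ?s * \<alpha> + 2 * (?s * \<beta>) - 4 * (?s * \<beta>) * (?s * \<beta>)
          + 4 * (?s * \<alpha>) * (?s * \<beta>) - ?s * \<alpha> * (?s * \<alpha>)"
        by (intro tendsto_intros P0 P1 Q1)
    qed (use that pos tb tt_lim in auto)
    moreover have "(real m * (2 * (?s * v1) + ?s * \<alpha> + 2 * (?s * \<beta>) - 4 * (?s * \<beta>) * (?s * \<beta>)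
          + 4 * (?s * \<alpha>) * (?s * \<beta>) - ?s * \<alpha> * (?s * \<alpha>)) + 0) / (1 + 4 * ?s * real m) = v2"
      unfolding \<alpha>_def \<beta>_def v1_def v2_def by (rule cf_all(5)[OF m2])
    ultimately show ?thesis by simp
  qed
  show ?thesis
    using W0[of 0] W1[of 0] W2[of 0] unfolding Ycov_V v0_def v1_def v2_def by simp
qed


end
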